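(* Let $X_1,\ldots,X_n$ be independent real random variables, let $\sigma>0$ and $w>0$, and assume that each $X_i/\sigma$ has a continuous density bounded above by $w$. Let $S=\sum_{i=1}^nX_i^2$. Then for every $x>0$, $$\mathbb{P}(S\leq\sigma^2x)\leq\exp\Big[\frac n2\Big\{1+\log(2\pi w^2)-\log\Big(\frac nx\Big)\Big\}\Big].$$ *)

theory Defs
  imports "HOL-Probability.Probability"
begin

end

theory Submission
  imports Defs
begin
lemma gauss_nn:
  fixes t :: real assumes t: "t > 0"
  shows "(\<integral>\<^sup>+y. ennreal (exp (- t * y\<^sup>2)) \<partial>lborel) = ennreal (sqrt (pi / t))"
proof -
  define s where "s = sqrt (1 / (2 * t))"
  have s: "s > 0" using t by (simp add: s_def)
  have s2: "s\<^sup>2 = 1 / (2 * t)" using t by (simp add: s_def)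
  have eq: "exp (- t * y\<^sup>2) = sqrt (pi / t) * normal_density 0 s y" for y
  proof -
    have "2 * pi * s\<^sup>2 = pi / t" using s2 t by (simp add: field_simps)
    moreover have "-(y - 0)\<^sup>2 / (2 * s\<^sup>2) = - t * y\<^sup>2" unfolding s2 using t by simp
    ultimately have "normal_density 0 s y = 1 / sqrt (pi / t) * exp (- t * y\<^sup>2)"
      unfolding normal_density_def by simp
    moreover have "sqrt (pi / t) > 0" using t by simp
    ultimately show ?thesis using t by simp
  qed
  have eq2: "ennreal (exp (- t * y\<^sup>2)) = ennreal (sqrt (pi / t)) * ennreal (normal_density 0 s y)" for y
    unfolding eq by (rule ennreal_mult) (use t in simp_all)
  have one: "(\<integral>\<^sup>+y. ennreal (normal_density 0 s y) \<partial>lborel) = 1"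
    using nn_integral_eq_integral[of lborel "normal_density 0 s"] s by simp
  have "(\<integral>\<^sup>+y. ennreal (exp (- t * y\<^sup>2)) \<partial>lborel)
      = (\<integral>\<^sup>+y. ennreal (sqrt (pi / t)) * ennreal (normal_density 0 s y) \<partial>lborel)"
    using eq2 by simp
  also have "\<dots> = ennreal (sqrt (pi / t)) * (\<integral>\<^sup>+y. ennreal (normal_density 0 s y) \<partial>lborel)"
    by (rule nn_integral_cmult) simp
  finally show ?thesis using one by simp
qed

theorem lemma1:
  fixes M :: "'a measure" and X :: "nat \<Rightarrow> 'a \<Rightarrow> real"
    and n :: nat and \<sigma> w x :: real
  assumes "prob_space M"
    and "prob_space.indep_vars M (\<lambda>_. borel) X {..<n}"
    and "\<sigma> > 0" and "w > 0"
    and "\<forall>i<n. \<exists>g :: real \<Rightarrow> real. continuous_on UNIV g \<and> (\<forall>t. 0 \<le> g t \<and> g t \<le> w)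
              \<and> distributed M lborel (\<lambda>\<omega>. X i \<omega> / \<sigma>) (\<lambda>t. ennreal (g t))"
    and "x > 0"
  shows "measure M {\<omega> \<in> space M. (\<Sum>i<n. (X i \<omega>)\<^sup>2) \<le> \<sigma>\<^sup>2 * x}
           \<le> exp (real n / 2 * (1 + ln (2 * pi * w\<^sup>2) - ln (real n / x)))"
proof -
  interpret P: prob_space M by fact
  note indep = assms(2) and sig = assms(3) and wpos = assms(4) and dens = assms(5) and xpos = assms(6)
  define A where "A = {\<omega> \<in> space M. (\<Sum>i<n. (X i \<omega>)\<^sup>2) \<le> \<sigma>\<^sup>2 * x}"
  have rv: "X i \<in> borel_measurable M" if "i < n" for i
    using indep that unfolding P.indep_vars_def by auto
  have Ameas: "A \<in> sets M" unfolding A_def using rv by measurable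
  show ?thesis
  proof (cases "n = 0")
    case True
    then show ?thesis by simp
  next
    case False
    then have npos: "real n > 0" by simp
    define t where "t = real n / (2 * x)"
    have tpos: "t > 0" using npos xpos by (simp add: t_def)
    define c where "c = w * sqrt (pi / t)"
    have cpos: "c > 0" using tpos wpos by (simp add: c_def)
    define Z where "Z i \<omega> = ennreal (exp (- t * (X i \<omega> / \<sigma>)\<^sup>2))" for i \<omega>
    have Zbound: "(\<integral>\<^sup>+\<omega>. Z i \<omega> \<partial>M) \<le> ennreal c" if "i < n" for i
    proof -
      from dens[rule_format, OF that] obtain g :: "real \<Rightarrow> real" where "continuous_on UNIV g" and g: "\<forall>t. 0 \<le> g t \<and> g t \<le> w"
        and D: "distributed M lborel (\<lambda>\<omega>. X i \<omega> / \<sigma>) (\<lambda>t. ennreal (g t))"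
        by blast
      have "(\<integral>\<^sup>+\<omega>. Z i \<omega> \<partial>M) = (\<integral>\<^sup>+y. ennreal (g y) * ennreal (exp (- t * y\<^sup>2)) \<partial>lborel)"
        unfolding Z_def
        by (rule distributed_nn_integral[OF D, where g="\<lambda>y. ennreal (exp (- t * y\<^sup>2))", symmetric]) simp
      also have "\<dots> \<le> (\<integral>\<^sup>+y. ennreal w * ennreal (exp (- t * y\<^sup>2)) \<partial>lborel)"
        by (intro nn_integral_mono mult_right_mono) (use g in \<open>auto intro!: ennreal_leI\<close>)
      also have "\<dots> = ennreal w * (\<integral>\<^sup>+y. ennreal (exp (- t * y\<^sup>2)) \<partial>lborel)"
        by (rule nn_integral_cmult) simp
      also have "\<dots> = ennreal c"
        unfolding gauss_nn[OF tpos] c_def by (rule ennreal_mult[symmetric]) (use wpos tpos in auto)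
      finally show ?thesis .
    qed
    have "emeasure M A = (\<integral>\<^sup>+\<omega>. indicator A \<omega> \<partial>M)"
      using Ameas by simp
    also have "\<dots> \<le> (\<integral>\<^sup>+\<omega>. ennreal (exp (t * x)) * (\<Prod>i<n. Z i \<omega>) \<partial>M)"
    proof (rule nn_integral_mono)
      fix \<omega> assume "\<omega> \<in> space M"
      show "indicator A \<omega> \<le> ennreal (exp (t * x)) * (\<Prod>i<n. Z i \<omega>)"
      proof (cases "\<omega> \<in> A")
        case True
        have "(\<Sum>i<n. (X i \<omega> / \<sigma>)\<^sup>2) = (\<Sum>i<n. (X i \<omega>)\<^sup>2) / \<sigma>\<^sup>2"
          by (simp add: power_divide sum_divide_distrib)
        also have "\<dots> \<le> x" using True sig unfolding A_def by (simp add: divide_le_eq mult.commute)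
        finally have le: "(\<Sum>i<n. (X i \<omega> / \<sigma>)\<^sup>2) \<le> x" .
        have "(\<Prod>i<n. Z i \<omega>) = ennreal (\<Prod>i<n. exp (- t * (X i \<omega> / \<sigma>)\<^sup>2))"
          unfolding Z_def by (rule prod_ennreal) simp
        also have "(\<Prod>i<n. exp (- t * (X i \<omega> / \<sigma>)\<^sup>2)) = exp (- t * (\<Sum>i<n. (X i \<omega> / \<sigma>)\<^sup>2))"
          by (simp add: exp_sum sum_distrib_left)
        finally have "ennreal (exp (t * x)) * (\<Prod>i<n. Z i \<omega>) = ennreal (exp (t * x) * exp (- t * (\<Sum>i<n. (X i \<omega> / \<sigma>)\<^sup>2)))"
          by (simp add: ennreal_mult)
        also have "exp (t * x) * exp (- t * (\<Sum>i<n. (X i \<omega> / \<sigma>)\<^sup>2)) = exp (t * (x - (\<Sum>i<n. (X i \<omega> / \<sigma>)\<^sup>2)))"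
          by (simp add: exp_add[symmetric] algebra_simps)
        finally have eqE: "ennreal (exp (t * x)) * (\<Prod>i<n. Z i \<omega>) = ennreal (exp (t * (x - (\<Sum>i<n. (X i \<omega> / \<sigma>)\<^sup>2))))" .
        have "1 \<le> exp (t * (x - (\<Sum>i<n. (X i \<omega> / \<sigma>)\<^sup>2)))" using le tpos by simp
        then have "ennreal 1 \<le> ennreal (exp (t * (x - (\<Sum>i<n. (X i \<omega> / \<sigma>)\<^sup>2))))" by (rule ennreal_leI)
        then show ?thesis using True by (simp add: eqE)
      qed simp
    qed
    also have "\<dots> = ennreal (exp (t * x)) * (\<integral>\<^sup>+\<omega>. (\<Prod>i<n. Z i \<omega>) \<partial>M)"
      by (rule nn_integral_cmult) (unfold Z_def, use rv in measurable)
    also have "(\<integral>\<^sup>+\<omega>. (\<Prod>i<n. Z i \<omega>) \<partial>M) = (\<Prod>i<n. \<integral>\<^sup>+\<omega>. Z i \<omega> \<partial>M)"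
    proof (rule P.indep_vars_nn_integral)
      show "P.indep_vars (\<lambda>_. borel) Z {..<n}"
        unfolding Z_def
        by (rule P.indep_vars_compose2[OF indep, where Y="\<lambda>i z. ennreal (exp (- t * (z / \<sigma>)\<^sup>2))"]) simp
    qed auto
    also have "ennreal (exp (t * x)) * (\<Prod>i<n. \<integral>\<^sup>+\<omega>. Z i \<omega> \<partial>M) \<le> ennreal (exp (t * x)) * (\<Prod>i<n. ennreal c)"
      by (intro mult_left_mono prod_mono_ennreal Zbound) auto
    also have "\<dots> = ennreal (exp (t * x) * c ^ n)"
      using cpos by (simp add: ennreal_mult prod_ennreal ennreal_power)
    finally have em: "emeasure M A \<le> ennreal (exp (t * x) * c ^ n)" .
    have mA: "measure M A \<le> exp (t * x) * c ^ n"
      using em P.emeasure_eq_measure cpos by (simp add: ennreal_le_iff)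
    have "exp (t * x) * c ^ n = exp (real n / 2 * (1 + ln (2 * pi * w\<^sup>2) - ln (real n / x)))"
    proof -
      have tx: "t * x = real n / 2" using xpos by (simp add: t_def)
      have cn: "c ^ n = exp (real n * ln c)" using cpos by (simp add: exp_of_nat_mult)
      have l1: "ln c = ln w + (ln 2 + ln pi + ln x - ln (real n)) / 2"
        using wpos xpos npos tpos unfolding c_def t_def
        by (simp add: ln_mult ln_div ln_sqrt)
      have l2: "ln (2 * pi * w\<^sup>2) = ln 2 + ln pi + 2 * ln w"
        using wpos by (simp add: ln_mult ln_realpow)
      have l3: "ln (real n / x) = ln (real n) - ln x"
        using npos xpos by (simp add: ln_div)
      have "exp (t * x) * c ^ n = exp (real n / 2 + real n * ln c)"
        unfolding tx cn by (simp add: exp_add)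
      also have "real n / 2 + real n * ln c = real n / 2 * (1 + ln (2 * pi * w\<^sup>2) - ln (real n / x))"
        unfolding l1 l2 l3 by (simp add: field_simps)
      finally show ?thesis .
    qed
    then show ?thesis using mA unfolding A_def by simp
  qed
qed
end
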